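(* Let $A=\begin{pmatrix} a & b\\ c & d\end{pmatrix}$ be a $2\times 2$ matrix with positive rational entries. The alternate minimization limit $S(A)$ of $A$ has rational entries if and only if $ad/(bc)$ is the square of a rational number.
   Context: For an $n\times n$ matrix $A=(a_{i,j})$ let $\mathrm{row}_i(A)=\sum_j a_{i,j}$ and $\mathrm{col}_j(A)=\sum_i a_{i,j}$. For a matrix $A$ with positive entries let $X(A)=\mathrm{diag}(1/\mathrm{row}_1(A),\ldots,1/\mathrm{row}_n(A))$ and $Y(A)=\mathrm{diag}(1/\mathrm{col}_1(A),\ldots,1/\mathrm{col}_n(A))$. The alternate minimization sequence of $A$ is defined by $A^{(0)}=A$, $A^{(2k+1)}=A^{(2k)}\,Y(A^{(2k)})$ and $A^{(2k+2)}=X(A^{(2k+1)})\,A^{(2k+1)}$ for $k\ge 0$; for positive matrices this sequence converges, and its limit $S(A)=\lim_{\ell\to\infty}A^{(\ell)}$ (a doubly stochastic matrix, i.e. all row and column sums equal $1$) is called the alternate minimization limit of $A$. *)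

theory Defs
  imports "HOL-Analysis.Analysis"
begin

definition row_sum :: "real^'n^'n \<Rightarrow> 'n \<Rightarrow> real" where
  "row_sum A i = (\<Sum>j\<in>UNIV. A $ i $ j)"

definition col_sum :: "real^'n^'n \<Rightarrow> 'n \<Rightarrow> real" where
  "col_sum A j = (\<Sum>i\<in>UNIV. A $ i $ j)"

definition diag_mat :: "('n \<Rightarrow> real) \<Rightarrow> real^'n^'n" where
  "diag_mat f = (\<chi> i j. if i = j then f i else 0)"

definition Xmat :: "real^'n^'n \<Rightarrow> real^'n^'n" where
  "Xmat A = diag_mat (\<lambda>i. 1 / row_sum A i)"

definition Ymat :: "real^'n^'n \<Rightarrow> real^'n^'n" where
  "Ymat A = diag_mat (\<lambda>j. 1 / col_sum A j)"

fun alt_min_seq :: "real^'n^'n \<Rightarrow> nat \<Rightarrow> real^'n^'n" where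
  "alt_min_seq A 0 = A"
| "alt_min_seq A (Suc l) =
     (if even l then alt_min_seq A l ** Ymat (alt_min_seq A l)
      else Xmat (alt_min_seq A l) ** alt_min_seq A l)"

definition alt_min_limit :: "real^'n^'n \<Rightarrow> real^'n^'n" where
  "alt_min_limit A = lim (alt_min_seq A)"

definition mat2 :: "real \<Rightarrow> real \<Rightarrow> real \<Rightarrow> real \<Rightarrow> real^2^2" where
  "mat2 a b c d = (\<chi> i j. if i = 1 then (if j = 1 then a else b) else (if j = 1 then c else d))"

end

theory Submission imports Defs begin

lemma mat2_11[simp]: "mat2 a b c d $ 1 $ 1 = a" by (simp add: mat2_def)
lemma mat2_12[simp]: "mat2 a b c d $ 1 $ 2 = b" by (simp add: mat2_def)
lemma mat2_21[simp]: "mat2 a b c d $ 2 $ 1 = c" by (simp add: mat2_def)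
lemma mat2_22[simp]: "mat2 a b c d $ 2 $ 2 = d" by (simp add: mat2_def)

lemma colnorm_entry: "(A ** Ymat A) $ i $ j = A $ i $ j / col_sum A j"
  by (simp add: matrix_matrix_mult_def Ymat_def diag_mat_def if_distrib cong: if_cong)

lemma rownorm_entry: "(Xmat A ** A) $ i $ j = A $ i $ j / row_sum A i"
proof -
  have "(Xmat A ** A) $ i $ j = (\<Sum>k\<in>UNIV. if i = k then A $ k $ j / row_sum A k else 0)"
    unfolding matrix_matrix_mult_def Xmat_def diag_mat_def by (simp only: vec_lambda_beta) (intro sum.cong, auto)
  then show ?thesis by simp
qed

lemma mat2_eqI:
  fixes A :: "real^2^2"
  assumes "A$1$1 = a" "A$1$2 = b" "A$2$1 = c" "A$2$2 = d"
  shows "A = mat2 a b c d"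
  using assms by (simp add: vec_eq_iff forall_2)

definition Rm :: "real \<Rightarrow> real \<Rightarrow> real \<Rightarrow> real \<Rightarrow> real \<Rightarrow> real^2^2" where
  "Rm a b c d r = mat2 (a/(a+b*r)) (b*r/(a+b*r)) (c/(c+d*r)) (d*r/(c+d*r))"

definition fr :: "real \<Rightarrow> real \<Rightarrow> real \<Rightarrow> real \<Rightarrow> real \<Rightarrow> real" where
  "fr a b c d r = (2*a*c + (a*d+b*c)*r)/((a*d+b*c) + 2*b*d*r)"

lemma frac_aux1:
  fixes x y u K1 K2 :: real
  assumes "x > 0" "y > 0" "u > 0" "K1 > 0" "K2 > 0"
  shows "(u*x/K1)/(u*x/K1 + u*y/K2) = x/(x+y*(K1/K2))"
    and "(u*y/K2)/(u*x/K1 + u*y/K2) = y*(K1/K2)/(x+y*(K1/K2))"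
proof -
  define S where "S = x*K2+y*K1"
  have p: "S > 0" using assms unfolding S_def by (intro add_pos_pos mult_pos_pos)
  have 1: "u*x/K1 + u*y/K2 = u*S/(K1*K2)" using assms unfolding S_def by (simp add: field_simps)
  have 2: "x+y*(K1/K2) = S/K2" using assms unfolding S_def by (simp add: field_simps)
  show "(u*x/K1)/(u*x/K1 + u*y/K2) = x/(x+y*(K1/K2))"
    unfolding 1 2 using assms p by (simp add: field_simps)
  show "(u*y/K2)/(u*x/K1 + u*y/K2) = y*(K1/K2)/(x+y*(K1/K2))"
    unfolding 1 2 using assms p by (simp add: field_simps)
qed

lemma two_step_gen:
  fixes a b c d u1 u2 v1 v2 :: real
  assumes "a > 0" "b > 0" "c > 0" "d > 0" "u1 > 0" "u2 > 0" "v1 > 0" "v2 > 0"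
  defines "M \<equiv> mat2 (u1* v1*a) (u1* v2*b) (u2* v1*c) (u2* v2*d)"
  shows "Xmat (M ** Ymat M) ** (M ** Ymat M) = Rm a b c d ((u1*a+u2*c)/(u1*b+u2*d))"
proof -
  define K1 where "K1 = u1*a+u2*c"
  define K2 where "K2 = u1*b+u2*d"
  have K: "K1 > 0" "K2 > 0" using assms by (auto simp: K1_def K2_def intro!: add_pos_pos)
  have cs1: "col_sum M 1 = v1 * K1" by (simp add: M_def col_sum_def sum_2 K1_def algebra_simps)
  have cs2: "col_sum M 2 = v2 * K2" by (simp add: M_def col_sum_def sum_2 K2_def algebra_simps)
  define N where "N = M ** Ymat M"
  have N11: "N$1$1 = u1*a/K1" using assms(1-8) K by (simp add: N_def colnorm_entry cs1) (simp add: M_def)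
  have N12: "N$1$2 = u1*b/K2" using assms(1-8) K by (simp add: N_def colnorm_entry cs2) (simp add: M_def)
  have N21: "N$2$1 = u2*c/K1" using assms(1-8) K by (simp add: N_def colnorm_entry cs1) (simp add: M_def)
  have N22: "N$2$2 = u2*d/K2" using assms(1-8) K by (simp add: N_def colnorm_entry cs2) (simp add: M_def)
  have rs1: "row_sum N 1 = u1*a/K1 + u1*b/K2" by (simp add: row_sum_def sum_2 N11 N12)
  have rs2: "row_sum N 2 = u2*c/K1 + u2*d/K2" by (simp add: row_sum_def sum_2 N21 N22)
  have pos: "a + b*(K1/K2) > 0" "c + d*(K1/K2) > 0" using assms(1-8) K by (auto intro!: add_pos_pos)
  have e11: "(u1*a/K1)/(u1*a/K1 + u1*b/K2) = a/(a+b*(K1/K2))"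
    using frac_aux1(1)[of a b u1 K1 K2] assms(1-8) K by blast
  have e12: "(u1*b/K2)/(u1*a/K1 + u1*b/K2) = b*(K1/K2)/(a+b*(K1/K2))"
    using frac_aux1(2)[of a b u1 K1 K2] assms(1-8) K by blast
  have e21: "(u2*c/K1)/(u2*c/K1 + u2*d/K2) = c/(c+d*(K1/K2))"
    using frac_aux1(1)[of c d u2 K1 K2] assms(1-8) K by blast
  have e22: "(u2*d/K2)/(u2*c/K1 + u2*d/K2) = d*(K1/K2)/(c+d*(K1/K2))"
    using frac_aux1(2)[of c d u2 K1 K2] assms(1-8) K by blast
  show ?thesis
    unfolding N_def[symmetric] K1_def[symmetric] K2_def[symmetric] Rm_def
    by (rule mat2_eqI) (simp_all only: rownorm_entry rs1 rs2 N11 N12 N21 N22 e11 e12 e21 e22 times_divide_eq_right)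
qed

lemma step0:
  assumes "a > 0" "b > 0" "c > 0" "d > 0"
  shows "Xmat (mat2 a b c d ** Ymat (mat2 a b c d)) ** (mat2 a b c d ** Ymat (mat2 a b c d)) = Rm a b c d ((a+c)/(b+d))"
  using two_step_gen[of a b c d 1 1 1 1] assms by simp

lemma step:
  assumes "a > 0" "b > 0" "c > 0" "d > 0" "r > 0"
  shows "Xmat (Rm a b c d r ** Ymat (Rm a b c d r)) ** (Rm a b c d r ** Ymat (Rm a b c d r)) = Rm a b c d (fr a b c d r)"
proof -
  define P where "P = a + b*r"
  define Q where "Q = c + d*r"
  have PQ: "P > 0" "Q > 0" using assms by (auto simp: P_def Q_def intro!: add_pos_pos)
  have R: "Rm a b c d r = mat2 ((1/P) * 1 * a) ((1/P) * r * b) ((1/Q) * 1 * c) ((1/Q) * r * d)"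
    unfolding Rm_def P_def Q_def by (simp add: mult.commute)
  have F: "((1/P)*a + (1/Q)*c)/((1/P)*b + (1/Q)*d) = fr a b c d r"
  proof -
    have 1: "(1/P)*a + (1/Q)*c = (a*Q + c*P)/(P*Q)" using PQ by (simp add: field_simps)
    have 2: "(1/P)*b + (1/Q)*d = (b*Q + d*P)/(P*Q)" using PQ by (simp add: field_simps)
    have 3: "a*Q + c*P = 2*a*c + (a*d+b*c)*r" unfolding P_def Q_def by (simp add: algebra_simps)
    have 4: "b*Q + d*P = (a*d+b*c) + 2*b*d*r" unfolding P_def Q_def by (simp add: algebra_simps)
    show ?thesis unfolding 1 2 3 4 fr_def using PQ by simp
  qed
  show ?thesis unfolding R using two_step_gen[of a b c d "1/P" "1/Q" 1 r] assms PQ F by simp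
qed

fun rho :: "real \<Rightarrow> real \<Rightarrow> real \<Rightarrow> real \<Rightarrow> nat \<Rightarrow> real" where
  "rho a b c d 0 = (a+c)/(b+d)"
| "rho a b c d (Suc k) = fr a b c d (rho a b c d k)"

lemma rho_pos:
  assumes "a > 0" "b > 0" "c > 0" "d > 0"
  shows "rho a b c d k > 0"
  using assms by (induction k) (auto simp: fr_def intro!: divide_pos_pos add_pos_pos mult_pos_pos)

lemma alt_even:
  assumes "a > 0" "b > 0" "c > 0" "d > 0"
  shows "alt_min_seq (mat2 a b c d) (2*k+2) = Rm a b c d (rho a b c d k)"
proof (induction k)
  case 0
  then show ?case using step0[OF assms] by (simp add: numeral_2_eq_2)
next
  case (Suc k)
  have e: "2 * Suc k + 2 = Suc (Suc (2*k+2))" by simp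
  show ?case unfolding e using Suc step[OF assms rho_pos[OF assms, of k]] by simp
qed

lemma alt_odd:
  assumes "a > 0" "b > 0" "c > 0" "d > 0"
  shows "alt_min_seq (mat2 a b c d) (2*k+3) = Rm a b c d (rho a b c d k) ** Ymat (Rm a b c d (rho a b c d k))"
proof -
  have e: "2*k+3 = Suc (2*k+2)" by simp
  show ?thesis unfolding e using alt_even[OF assms, of k] by simp
qed

lemma wz:
  fixes p q z :: real
  assumes "p > 0" "q > 0" "z > 0"
  defines "Z \<equiv> (2*p*q + (p^2+q^2)*z)/((p^2+q^2)+2*p*q*z)"
  shows "(Z-1)/(Z+1) = ((p-q)^2/(p+q)^2) * ((z-1)/(z+1))"
proof -
  define D where "D = (p^2+q^2)+2*p*q*z"
  have D: "D > 0" unfolding D_def using assms by (intro add_pos_pos) auto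
  have 1: "Z - 1 = (p-q)^2*(z-1)/D" unfolding Z_def D_def[symmetric] using D
    by (simp add: field_simps) (simp add: D_def power2_eq_square algebra_simps)
  have 2: "Z + 1 = (p+q)^2*(z+1)/D" unfolding Z_def D_def[symmetric] using D
    by (simp add: field_simps) (simp add: D_def power2_eq_square algebra_simps)
  have 3: "(p+q)^2 > 0" "z + 1 > 0" using assms by auto
  have 4: "(p+q)^2*(z+1) > 0" using 3 by simp
  have "(Z-1)/(Z+1) = ((p-q)^2*(z-1))/((p+q)^2*(z+1))" unfolding 1 2 using D 4 by (simp add: divide_simps)
  then show ?thesis by simp
qed

lemma fr_scaled:
  fixes a b c d p q s r :: real
  assumes "a > 0" "b > 0" "c > 0" "d > 0" "p > 0" "q > 0" "r > 0"
    and "a*d = p^2" "b*c = q^2" and s: "s = a*q/(b*p)"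
  shows "fr a b c d r = s * ((2*p*q + (p^2+q^2)*(r/s))/((p^2+q^2)+2*p*q*(r/s)))"
proof -
  have sp: "s > 0" using assms by simp
  have h1: "p*q* s = a*c"
  proof -
    have "p*q* s = a*q^2/b" using assms by (simp add: power2_eq_square)
    also have "... = a*c" using assms(2,9) by (simp add: field_simps)
    finally show ?thesis .
  qed
  have h2: "p*q/s = b*d"
  proof -
    have "p*q/s = b*p^2/a" unfolding s using assms(1,2,5,6) by (simp add: power2_eq_square field_simps)
    also have "... = b*d" using assms(1,8) by (simp add: field_simps)
    finally show ?thesis .
  qed
  have "s * ((2*p*q + (p^2+q^2)*(r/s))/((p^2+q^2)+2*p*q*(r/s)))
      = (2*(p*q* s) + (p^2+q^2)*r)/((p^2+q^2)+2*(p*q/s)*r)"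
  proof -
    have n: "s * (2*p*q + (p^2+q^2)*(r/s)) = 2*(p*q* s) + (p^2+q^2)*r" using sp by (simp add: field_simps)
    have e: "(p^2+q^2)+2*p*q*(r/s) = (p^2+q^2)+2*(p*q/s)*r" by simp
    show ?thesis by (simp only: e n[symmetric] times_divide_eq_right[symmetric])
  qed
  also have "... = fr a b c d r" unfolding h1 h2 fr_def assms(8,9) by (simp add: algebra_simps)
  finally show ?thesis by simp
qed

lemma rho_lim:
  fixes a b c d :: real
  assumes "a > 0" "b > 0" "c > 0" "d > 0"
  defines "p \<equiv> sqrt (a*d)" and "q \<equiv> sqrt (b*c)"
  shows "rho a b c d \<longlonglongrightarrow> a*q/(b*p)"
proof -
  define s where "s = a*q/(b*p)"
  have pq: "p > 0" "q > 0" "a*d = p^2" "b*c = q^2" using assms(1-4) by (auto simp: p_def q_def)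
  have sp: "s > 0" using pq assms(1-4) by (simp add: s_def)
  define \<kappa> where "\<kappa> = (p-q)^2/(p+q)^2"
  have k0: "\<kappa> \<ge> 0" by (simp add: \<kappa>_def)
  have k1: "\<kappa> < 1"
  proof -
    have "(p-q)^2 < (p+q)^2" using pq by (simp add: power2_eq_square algebra_simps)
    then show ?thesis using pq by (simp add: \<kappa>_def)
  qed
  define w where "w k = (rho a b c d k - s)/(rho a b c d k + s)" for k
  have rp: "rho a b c d k > 0" for k using rho_pos[OF assms(1-4)] .
  have wS: "w (Suc k) = \<kappa> * w k" for k
  proof -
    define r where "r = rho a b c d k"
    have r: "r > 0" using rp r_def by simp
    define z where "z = r / s"
    have z: "z > 0" using r sp z_def by simp
    define Z where "Z = (2*p*q + (p^2+q^2)*z)/((p^2+q^2)+2*p*q*z)"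
    have Zp: "Z > 0" unfolding Z_def using pq z by (intro divide_pos_pos add_pos_pos mult_pos_pos) auto
    have fr: "fr a b c d r = s * Z" unfolding Z_def z_def
      using fr_scaled[OF assms(1-4) pq(1,2) r pq(3,4) s_def] .
    have "w (Suc k) = (s*Z - s)/(s*Z + s)" unfolding w_def using fr r_def by simp
    also have "... = (s*(Z-1))/(s*(Z+1))" by (simp add: algebra_simps)
    also have "... = (Z-1)/(Z+1)" using sp by simp
    also have "... = \<kappa> * ((z-1)/(z+1))" unfolding Z_def \<kappa>_def using wz[OF pq(1,2) z] .
    also have "(z-1)/(z+1) = w k"
    proof -
      have 1: "z-1 = (r-s)/s" "z+1 = (r+s)/s" using sp unfolding z_def by (simp_all add: diff_divide_distrib add_divide_distrib)
      have "((r-s)/s)/((r+s)/s) = (r-s)/(r+s)" using sp by simp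
      then show ?thesis unfolding 1 w_def r_def by simp
    qed
    finally show ?thesis .
  qed
  have wk: "w k = \<kappa>^k * w 0" for k by (induction k) (simp_all add: wS)
  have "(\<lambda>k. \<kappa>^k * w 0) \<longlonglongrightarrow> 0 * w 0"
    by (intro tendsto_mult LIMSEQ_power_zero tendsto_const) (use k0 k1 in simp)
  moreover have e: "(\<lambda>k. \<kappa>^k * w 0) = w" by (rule ext) (rule wk[symmetric])
  ultimately have w0: "w \<longlonglongrightarrow> 0" by simp
  have rw: "rho a b c d k = s * (1 + w k)/(1 - w k)" for k
  proof -
    define R where "R = rho a b c d k"
    have Rs: "R + s > 0" "R > 0" using rp[of k] sp R_def by simp_all
    have 1: "1 + w k = 2*R/(R+s)" unfolding w_def R_def[symmetric] using Rs
      by (simp add: field_simps)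
    have 2: "1 - w k = 2* s/(R+s)" unfolding w_def R_def[symmetric] using Rs
      by (simp add: field_simps)
    have "s * (2*R/(R+s)) / (2* s/(R+s)) = R" using Rs sp by simp
    then show ?thesis unfolding 1 2 R_def by simp
  qed
  have "(\<lambda>k. s * (1 + w k)/(1 - w k)) \<longlonglongrightarrow> s * (1 + 0)/(1 - 0)"
    by (intro tendsto_divide tendsto_mult tendsto_const tendsto_add tendsto_diff w0) simp
  moreover have "(\<lambda>k. s * (1 + w k)/(1 - w k)) = rho a b c d" using rw by auto
  ultimately show ?thesis unfolding s_def by simp
qed

lemma seq_even_odd:
  fixes f :: "nat \<Rightarrow> 'a::topological_space"
  assumes "(\<lambda>n. f (2*n)) \<longlonglongrightarrow> l" "(\<lambda>n. f (2*n+1)) \<longlonglongrightarrow> l"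
  shows "f \<longlonglongrightarrow> l"
proof (rule topological_tendstoI)
  fix S assume S: "open S" "l \<in> S"
  obtain N1 where N1: "\<And>n. n \<ge> N1 \<Longrightarrow> f (2*n) \<in> S"
    using topological_tendstoD[OF assms(1) S] unfolding eventually_sequentially by blast
  obtain N2 where N2: "\<And>n. n \<ge> N2 \<Longrightarrow> f (2*n+1) \<in> S"
    using topological_tendstoD[OF assms(2) S] unfolding eventually_sequentially by blast
  show "eventually (\<lambda>n. f n \<in> S) sequentially"
    unfolding eventually_sequentially
  proof (intro exI allI impI)
    fix n assume n: "2*N1 + 2*N2 \<le> n"
    show "f n \<in> S"
    proof (cases "even n")
      case True
      then obtain m where "n = 2*m" by (auto elim: evenE)
      then show ?thesis using N1[of m] n by simp
    next
      case False
      then obtain m where "n = 2*m+1" by (auto elim: oddE)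
      then show ?thesis using N2[of m] n by simp
    qed
  qed
qed

lemma h0:
  fixes a x u y :: real
  assumes "a > 0" "x > 0" "u > 0"
  shows "a/(a*u/x) = x/u" "(a*y/x)/(a*u/x) = y/u"
  using assms by (simp_all add: field_simps)

lemma h1:
  fixes a x y :: real
  assumes "a > 0" "x > 0" "y > 0"
  shows "a/(a + a*y/x) = x/(x+y)" "(a*y/x)/(a + a*y/x) = y/(x+y)"
proof -
  have e: "a + a*y/x = a*(x+y)/x" using assms by (simp add: field_simps)
  have u: "x + y > 0" using assms by simp
  show "a/(a + a*y/x) = x/(x+y)" "(a*y/x)/(a + a*y/x) = y/(x+y)"
    unfolding e using h0[OF assms(1,2) u] by simp_all
qed

lemma Rm_limit_val:
  fixes a b c d :: real
  assumes "a > 0" "b > 0" "c > 0" "d > 0"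
  defines "p \<equiv> sqrt (a*d)" and "q \<equiv> sqrt (b*c)"
  shows "Rm a b c d (a*q/(b*p)) = mat2 (p/(p+q)) (q/(p+q)) (q/(p+q)) (p/(p+q))"
proof -
  have pq: "p > 0" "q > 0" "a*d = p^2" "b*c = q^2" using assms(1-4) by (auto simp: p_def q_def)
  have 1: "b*(a*q/(b*p)) = a*q/p" using pq assms(2) by simp
  have 2: "d*(a*q/(b*p)) = p*q/b" using pq assms(1-4) by (simp add: power2_eq_square field_simps)
  have e1: "a/(a + a*q/p) = p/(p+q)" using h1(1)[of a p q] pq assms(1) by simp
  have e2: "(a*q/p)/(a + a*q/p) = q/(p+q)" using h1(2)[of a p q] pq assms(1) by simp
  have e3: "c/(c + p*q/b) = q/(p+q)"
  proof -
    have "c/(c + p*q/b) = (b*c)/(b*c + p*q)" using pq assms(2,3) by (simp add: field_simps)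
    also have "... = (q*q)/(q*(p+q))" unfolding pq(4) by (simp add: power2_eq_square algebra_simps)
    also have "... = q/(p+q)" using pq by simp
    finally show ?thesis .
  qed
  have e4: "(p*q/b)/(c + p*q/b) = p/(p+q)"
  proof -
    have "(p*q/b)/(c + p*q/b) = (p*q)/(b*c + p*q)" using pq assms(2,3) by (simp add: field_simps)
    also have "... = (q*p)/(q*(p+q))" unfolding pq(4) by (simp add: power2_eq_square algebra_simps)
    also have "... = p/(p+q)" using pq by simp
    finally show ?thesis .
  qed
  show ?thesis unfolding Rm_def mult.assoc[symmetric] 1 2 e1 e2 e3 e4
    using e1 e2 e3 e4 1 2 by simp
qed

lemma alt_lim:
  fixes a b c d :: real
  assumes "a > 0" "b > 0" "c > 0" "d > 0"
  defines "p \<equiv> sqrt (a*d)" and "q \<equiv> sqrt (b*c)"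
  shows "alt_min_seq (mat2 a b c d) \<longlonglongrightarrow> mat2 (p/(p+q)) (q/(p+q)) (q/(p+q)) (p/(p+q))"
proof -
  define s where "s = a*q/(b*p)"
  define L where "L = mat2 (p/(p+q)) (q/(p+q)) (q/(p+q)) (p/(p+q))"
  have pq: "p > 0" "q > 0" using assms(1-4) by (auto simp: p_def q_def)
  have sp: "s > 0" using pq assms(1-4) by (simp add: s_def)
  have LR: "Rm a b c d s = L" unfolding s_def L_def p_def q_def by (rule Rm_limit_val[OF assms(1-4)])
  have r: "rho a b c d \<longlonglongrightarrow> s" unfolding s_def p_def q_def by (rule rho_lim[OF assms(1-4)])
  have d1: "a + b* s \<noteq> 0" "c + d* s \<noteq> 0" proof -
    have "a + b * s > 0" "c + d * s > 0" using assms(1-4) sp by (simp_all add: add_pos_pos)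
    then show "a + b * s \<noteq> 0" "c + d * s \<noteq> 0" by simp_all
  qed
  have t1: "(\<lambda>k. a/(a+b*rho a b c d k)) \<longlonglongrightarrow> a/(a+b* s)"
    by (intro tendsto_divide tendsto_add tendsto_mult tendsto_const r d1)
  have t2: "(\<lambda>k. b*rho a b c d k/(a+b*rho a b c d k)) \<longlonglongrightarrow> b* s/(a+b* s)"
    by (intro tendsto_divide tendsto_add tendsto_mult tendsto_const r d1)
  have t3: "(\<lambda>k. c/(c+d*rho a b c d k)) \<longlonglongrightarrow> c/(c+d* s)"
    by (intro tendsto_divide tendsto_add tendsto_mult tendsto_const r d1)
  have t4: "(\<lambda>k. d*rho a b c d k/(c+d*rho a b c d k)) \<longlonglongrightarrow> d* s/(c+d* s)"
    by (intro tendsto_divide tendsto_add tendsto_mult tendsto_const r d1)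
  have ent: "(\<lambda>k. Rm a b c d (rho a b c d k) $ i $ j) \<longlonglongrightarrow> L $ i $ j" for i j
    unfolding LR[symmetric]
    using exhaust_2[of i] exhaust_2[of j] t1 t2 t3 t4 by (auto simp: Rm_def)
  have cs: "(\<lambda>k. col_sum (Rm a b c d (rho a b c d k)) j) \<longlonglongrightarrow> col_sum L j" for j
    unfolding col_sum_def sum_2 by (intro tendsto_add ent)
  have cs1: "col_sum L j = 1" for j
  proof -
    have "p/(p+q) + q/(p+q) = (p+q)/(p+q)" by (rule add_divide_distrib[symmetric])
    also have "... = 1" using pq by simp
    finally have "p/(p+q) + q/(p+q) = 1" "q/(p+q) + p/(p+q) = 1" by (simp_all add: add.commute)
    then show ?thesis using exhaust_2[of j] by (auto simp: L_def col_sum_def sum_2)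
  qed
  have ev: "(\<lambda>k. alt_min_seq (mat2 a b c d) (2*k)) \<longlonglongrightarrow> L"
  proof (rule LIMSEQ_imp_Suc)
    show "(\<lambda>k. alt_min_seq (mat2 a b c d) (2*Suc k)) \<longlonglongrightarrow> L"
      unfolding mult_Suc_right add_2_eq_Suc'[symmetric] add.commute[of 2]
      unfolding alt_even[OF assms(1-4)]
      by (intro vec_tendstoI ent)
  qed
  have od: "(\<lambda>k. alt_min_seq (mat2 a b c d) (2*k+1)) \<longlonglongrightarrow> L"
  proof (rule LIMSEQ_imp_Suc)
    have e: "2 * Suc k + 1 = 2*k+3" for k by simp
    have "(\<lambda>k. (Rm a b c d (rho a b c d k) ** Ymat (Rm a b c d (rho a b c d k))) $ i $ j) \<longlonglongrightarrow> L $ i $ j" for i j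
    proof -
      have "(\<lambda>k. Rm a b c d (rho a b c d k) $ i $ j / col_sum (Rm a b c d (rho a b c d k)) j) \<longlonglongrightarrow> L $ i $ j / col_sum L j"
        by (intro tendsto_divide ent cs) (simp add: cs1)
      then show ?thesis unfolding colnorm_entry cs1 by simp
    qed
    then show "(\<lambda>k. alt_min_seq (mat2 a b c d) (2*Suc k+1)) \<longlonglongrightarrow> L"
      unfolding e alt_odd[OF assms(1-4)]
      by (intro vec_tendstoI)
  qed
  show ?thesis using seq_even_odd[OF ev od] unfolding L_def .
qed

theorem corollary5:
  fixes a b c d :: real
  assumes "a \<in> \<rat>" "b \<in> \<rat>" "c \<in> \<rat>" "d \<in> \<rat>"
    and "a > 0" "b > 0" "c > 0" "d > 0"
  shows "(\<forall>i j. alt_min_limit (mat2 a b c d) $ i $ j \<in> \<rat>)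
     \<longleftrightarrow> (\<exists>q\<in>\<rat>. a * d / (b * c) = q ^ 2)"
proof -
  define p where "p = sqrt (a*d)"
  define q where "q = sqrt (b*c)"
  have pq: "p > 0" "q > 0" "a*d = p^2" "b*c = q^2" using assms(5-8) by (auto simp: p_def q_def)
  define t where "t = p/q"
  have tp: "t > 0" using pq by (simp add: t_def)
  have t2: "a * d / (b * c) = t^2" unfolding t_def pq(3,4) by (simp add: power_divide)
  have lim: "alt_min_limit (mat2 a b c d) = mat2 (p/(p+q)) (q/(p+q)) (q/(p+q)) (p/(p+q))"
    unfolding alt_min_limit_def p_def q_def by (rule limI, rule alt_lim[OF assms(5-8)])
  have x: "p/(p+q) = t/(t+1)" unfolding t_def using pq by (simp add: field_simps)
  have y: "q/(p+q) = 1/(t+1)" unfolding t_def using pq by (simp add: field_simps)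
  have "(\<forall>i j. alt_min_limit (mat2 a b c d) $ i $ j \<in> \<rat>) \<longleftrightarrow> t/(t+1) \<in> \<rat> \<and> 1/(t+1) \<in> \<rat>"
    unfolding lim x y by (auto simp: forall_2)
  also have "... \<longleftrightarrow> t \<in> \<rat>"
  proof
    assume h: "t/(t+1) \<in> \<rat> \<and> 1/(t+1) \<in> \<rat>"
    have "t = (t/(t+1)) / (1/(t+1))" using tp by simp
    then show "t \<in> \<rat>" using h by (metis Rats_divide)
  next
    assume "t \<in> \<rat>"
    then show "t/(t+1) \<in> \<rat> \<and> 1/(t+1) \<in> \<rat>" by simp
  qed
  also have "... \<longleftrightarrow> (\<exists>q\<in>\<rat>. a * d / (b * c) = q ^ 2)"
  proof
    assume "t \<in> \<rat>" then show "\<exists>q\<in>\<rat>. a * d / (b * c) = q ^ 2" using t2 by blast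
  next
    assume "\<exists>q\<in>\<rat>. a * d / (b * c) = q ^ 2"
    then obtain r where r: "r \<in> \<rat>" "t^2 = r^2" using t2 by auto
    have "t = \<bar>r\<bar>" using r(2) tp by (metis abs_of_pos power2_eq_iff_nonneg abs_ge_zero power2_abs less_imp_le)
    then show "t \<in> \<rat>" using r(1) by simp
  qed
  finally show ?thesis .
qed

end
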